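(* For any $\vartheta,\varphi\in[0,2\pi]$ and $p,q\in[0,1]$, $$\sqrt{1-pq\cos(\vartheta+\varphi)}\le\sqrt{1-p\cos\vartheta}+\sqrt{1-q\cos\varphi},$$ $$\sqrt{1-pq\cos(\vartheta-\varphi)}\ge\sqrt{1-p\cos\vartheta}-\sqrt{1-q\cos\varphi}.$$ *)

theory Defs
  imports Complex_Main
begin

end

theory Submission
  imports Defs
begin

lemma keyprod:
  fixes a b u v :: real
  assumes "a \<ge> 0" "b \<ge> 0" "u^2 \<le> a^2*(2-a^2)" "v^2 \<le> b^2*(2-b^2)"
  shows "(u*v)^2 \<le> (a^2*(2-a^2))*(b^2*(2-b^2))"
proof -
  have "(u*v)^2 = u^2*v^2" by (simp add: power_mult_distrib)
  also have "\<dots> \<le> (a^2*(2-a^2))*(b^2*(2-b^2))"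
  proof (rule mult_mono)
    have "0 \<le> u^2" by simp
    thus "0 \<le> a^2*(2-a^2)" using assms(3) by linarith
  qed (use assms in auto)
  finally show ?thesis .
qed

lemma key1:
  fixes a b u v :: real
  assumes "a \<ge> 0" "b \<ge> 0" "u^2 \<le> a^2*(2-a^2)" "v^2 \<le> b^2*(2-b^2)"
  shows "u*v \<le> 2*a*b + a^2*b^2"
proof -
  have h: "(u*v)^2 \<le> (a^2*(2-a^2))*(b^2*(2-b^2))" using keyprod[OF assms] .
  have "(a^2*(2-a^2))*(b^2*(2-b^2)) \<le> (2*a*b + a^2*b^2)^2"
  proof -
    have "(2*a*b + a^2*b^2)^2 - (a^2*(2-a^2))*(b^2*(2-b^2)) = 2*a^2*b^2*(a+b)^2"
      by algebra
    moreover have "2*a^2*b^2*(a+b)^2 \<ge> 0" by simp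
    ultimately show ?thesis by linarith
  qed
  with h have "(u*v)^2 \<le> (2*a*b + a^2*b^2)^2" by linarith
  hence "\<bar>u*v\<bar> \<le> \<bar>2*a*b + a^2*b^2\<bar>" using abs_le_square_iff by blast
  moreover have "2*a*b + a^2*b^2 \<ge> 0" using assms by simp
  ultimately show ?thesis by linarith
qed

lemma key2:
  fixes a b u v :: real
  assumes "a \<ge> 0" "b \<ge> 0" "u^2 \<le> a^2*(2-a^2)" "v^2 \<le> b^2*(2-b^2)"
    "a^2 \<le> 2" "b^2 \<le> 2"
  shows "u*v \<le> 2*a*b - a^2*b^2"
proof -
  have h: "(u*v)^2 \<le> (a^2*(2-a^2))*(b^2*(2-b^2))" using keyprod[OF assms(1-4)] .
  have "(a^2*(2-a^2))*(b^2*(2-b^2)) \<le> (2*a*b - a^2*b^2)^2"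
  proof -
    have "(2*a*b - a^2*b^2)^2 - (a^2*(2-a^2))*(b^2*(2-b^2)) = 2*a^2*b^2*(a-b)^2"
      by algebra
    moreover have "2*a^2*b^2*(a-b)^2 \<ge> 0" by simp
    ultimately show ?thesis by linarith
  qed
  with h have "(u*v)^2 \<le> (2*a*b - a^2*b^2)^2" by linarith
  hence "\<bar>u*v\<bar> \<le> \<bar>2*a*b - a^2*b^2\<bar>" using abs_le_square_iff by blast
  moreover have "a*b \<le> 2"
  proof -
    have "a^2*b^2 \<le> 2*2" by (rule mult_mono) (use assms in auto)
    hence "(a*b)^2 \<le> 2^2" by (simp add: power_mult_distrib)
    thus ?thesis by (rule power2_le_imp_le) simp
  qed
  hence "(a*b)*(a*b) \<le> 2*(a*b)" using assms by (intro mult_right_mono) auto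
  moreover have "a^2*b^2 = (a*b)*(a*b)" by algebra
  moreover have "2*a*b = 2*(a*b)" by simp
  ultimately show ?thesis by linarith
qed

lemma sinbound:
  fixes p c s :: real
  assumes "p \<in> {0..1}" "s^2 + c^2 = 1"
  shows "(p*s)^2 \<le> (sqrt (1-p*c))^2 * (2 - (sqrt (1-p*c))^2)"
proof -
  have "c^2 \<le> 1" using assms(2) zero_le_power2[of s] by linarith
  hence c: "\<bar>c\<bar> \<le> 1" by (simp add: abs_square_le_1)
  have "p*c \<le> 1" using assms c
  proof -
    have "p*c \<le> p*\<bar>c\<bar>" using assms by (intro mult_left_mono) auto
    also have "\<dots> \<le> 1*1" using assms c by (intro mult_mono) auto
    finally show ?thesis by simp
  qed
  hence e: "(sqrt (1-p*c))^2 = 1 - p*c" by simp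
  have "p^2 \<le> 1" using assms by (simp add: power_le_one)
  have "(p*s)^2 = p^2 - p^2*c^2" using assms(2)
  proof -
    have "s^2 = 1 - c^2" using assms(2) by linarith
    thus ?thesis by (simp add: power_mult_distrib right_diff_distrib)
  qed
  also have "\<dots> \<le> 1 - p^2*c^2" using \<open>p^2 \<le> 1\<close> by simp
  also have "\<dots> = (1-p*c)*(2-(1-p*c))" by algebra
  finally show ?thesis using e by simp
qed

theorem lemma1:
  fixes \<theta> \<phi> p q :: real
  assumes "\<theta> \<in> {0..2*pi}" and "\<phi> \<in> {0..2*pi}"
    and "p \<in> {0..1}" and "q \<in> {0..1}"
  shows "sqrt (1 - p*q*cos (\<theta> + \<phi>)) \<le> sqrt (1 - p*cos \<theta>) + sqrt (1 - q*cos \<phi>) \<and>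
         sqrt (1 - p*q*cos (\<theta> - \<phi>)) \<ge> sqrt (1 - p*cos \<theta>) - sqrt (1 - q*cos \<phi>)"
proof -
  define a where "a = sqrt (1 - p*cos \<theta>)"
  define b where "b = sqrt (1 - q*cos \<phi>)"
  define u where "u = p * sin \<theta>"
  define v where "v = q * sin \<phi>"
  define P where "P = p * cos \<theta>"
  define Q where "Q = q * cos \<phi>"
  have P1: "\<bar>P\<bar> \<le> 1" unfolding P_def using assms(3)
    by (auto simp: abs_mult intro: mult_le_one)
  have Q1: "\<bar>Q\<bar> \<le> 1" unfolding Q_def using assms(4)
    by (auto simp: abs_mult intro: mult_le_one)
  have a0: "a \<ge> 0" and b0: "b \<ge> 0" using P1 Q1 unfolding a_def b_def P_def Q_def by auto
  have a2: "a^2 = 1 - P" unfolding a_def P_def using P1 P_def by simp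
  have b2: "b^2 = 1 - Q" unfolding b_def Q_def using Q1 Q_def by simp
  have ub: "u^2 \<le> a^2*(2-a^2)" unfolding u_def a_def
    using sinbound[OF assms(3), of "sin \<theta>" "cos \<theta>"] by simp
  have vb: "v^2 \<le> b^2*(2-b^2)" unfolding v_def b_def
    using sinbound[OF assms(4), of "sin \<phi>" "cos \<phi>"] by simp
  have ab2: "a^2*b^2 = 1 - P - Q + P*Q" unfolding a2 b2 by algebra
  have cp: "p*q*cos (\<theta> + \<phi>) = P*Q - u*v"
    unfolding P_def Q_def u_def v_def by (simp add: cos_add algebra_simps)
  have cm: "p*q*cos (\<theta> - \<phi>) = P*Q + u*v"
    unfolding P_def Q_def u_def v_def by (simp add: cos_diff algebra_simps)
  have part1: "sqrt (1 - p*q*cos (\<theta> + \<phi>)) \<le> a + b"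
  proof -
    have k: "u*v \<le> 2*a*b + a^2*b^2" using key1[OF a0 b0 ub vb] .
    have e: "(a+b)^2 = a^2 + b^2 + 2*a*b" by (simp add: power2_sum)
    have "1 - p*q*cos (\<theta> + \<phi>) \<le> (a+b)^2" using k e a2 b2 ab2 cp by linarith
    hence "sqrt (1 - p*q*cos (\<theta> + \<phi>)) \<le> sqrt ((a+b)^2)" by (rule real_sqrt_le_mono)
    also have "\<dots> = a + b" using a0 b0 by simp
    finally show ?thesis .
  qed
  have part2: "a - b \<le> sqrt (1 - p*q*cos (\<theta> - \<phi>))"
  proof (cases "a - b \<le> 0")
    case True
    have "\<bar>p*q*cos (\<theta> - \<phi>)\<bar> \<le> 1" using assms(3,4)
      by (auto simp: abs_mult intro!: mult_le_one)
    hence "0 \<le> 1 - p*q*cos (\<theta> - \<phi>)" by linarith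
    hence "0 \<le> sqrt (1 - p*q*cos (\<theta> - \<phi>))" by simp
    thus ?thesis using True by linarith
  next
    case False
    have k: "u*v \<le> 2*a*b - a^2*b^2" using key2[OF a0 b0 ub vb] a2 b2 P1 Q1 by linarith
    have e: "(a-b)^2 = a^2 + b^2 - 2*a*b" by (simp add: power2_diff)
    have "(a-b)^2 \<le> 1 - p*q*cos (\<theta> - \<phi>)" using k e a2 b2 ab2 cm by linarith
    hence "sqrt ((a-b)^2) \<le> sqrt (1 - p*q*cos (\<theta> - \<phi>))" by (rule real_sqrt_le_mono)
    moreover have "sqrt ((a-b)^2) = a - b" using False by simp
    ultimately show ?thesis by simp
  qed
  show ?thesis using part1[unfolded a_def b_def] part2[unfolded a_def b_def] by (rule conjI)
qed

end
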